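(* Let $a,b$ be real numbers with $0<a<1$, $0\le b<1$, and suppose $2^{e_0}a$ and $2^{e_0}b$ are integers for some $e_0$. Put $k_{\mathrm r}=-\frac{1}{1-a}$ and $c=\frac{1}{2-a}$ (the unique fixed point of the continuous generalized Tent map). Then there is $E$ such that for every integer $e\ge \max(E,e_0)$ the following holds, where $T_e$ is the generalized Tent map defined below and $x'=\max\{x\in\{0,\dots,2^e\} : x\ge 2^e a,\ T_e(x)\ge 2^e a\}$: for every integer $x$ with $2^e a\le x\le 2^e c+\frac{k_{\mathrm r}}{k_{\mathrm r}^2-1}$ one has $T_e^2(x)<x$, and for every integer $x$ with $2^e c+\frac{1}{k_{\mathrm r}^2-1}<x\le x'$ one has $T_e^2(x)>x$. (Here $T_e^2=T_e\circ T_e$.)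
   Context: The generalized Tent map in the fixed-point domain of precision $e$ (with floor quantization) is the map $T_e:\{0,1,\dots,2^e\}\to\mathbb{Z}$ given by $$T_e(x)=\begin{cases}\left\lfloor 2^e b+\frac{1-b}{a}\,x\right\rfloor & \text{if } 0\le x<2^e a,\\[2pt] \left\lfloor \frac{2^e-x}{1-a}\right\rfloor & \text{if } 2^e a\le x\le 2^e,\end{cases}$$ where $a,b$ are parameters with $2^e a,2^e b\in\{0,1,\dots,2^e\}$. *)

theory Defs
  imports Complex_Main
begin

text \<open>Generalized Tent map in fixed-point precision e with floor quantization.
  Defined on all integers; the relevant domain is {0..2^e}.\<close>
definition tent_fp :: "nat \<Rightarrow> real \<Rightarrow> real \<Rightarrow> int \<Rightarrow> int" where
  "tent_fp e a b x =
     (if real_of_int x < 2^e * a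
      then \<lfloor>2^e * b + (1 - b) / a * real_of_int x\<rfloor>
      else \<lfloor>(2^e - real_of_int x) / (1 - a)\<rfloor>)"

end

theory Submission
  imports Defs
begin

lemma tent_right:
  assumes "2^e * a \<le> real_of_int x"
  shows "tent_fp e a b x = \<lfloor>(2^e - real_of_int x) / (1 - a)\<rfloor>"
  using assms by (simp add: tent_fp_def)

lemma key1:
  fixes N a x y :: real
  assumes "0 < a" "a < 1" "y > (N - x)/(1-a) - 1"
    and "x \<le> (N*a - (1-a)) / (a*(2-a))"
  shows "(N - y)/(1-a) < x"
proof -
  have m: "1 - a > 0" using assms by simp
  have d: "a*(2-a) > 0" using assms by simp
  have h1: "x * (a*(2-a)) \<le> N*a - (1-a)" using assms(4) d by (simp add: pos_le_divide_eq)
  have h2: "y*(1-a) > N - x - (1-a)" using assms(3) m by (simp add: field_simps)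
  have "N - y < x*(1-a)"
  proof -
    have "(N - y)*(1-a) = N*(1-a) - y*(1-a)" by (simp add: algebra_simps)
    also have "\<dots> < N*(1-a) - N + x + (1-a)" using h2 by linarith
    also have "\<dots> \<le> x*(1-a)*(1-a)" using h1 by (simp add: algebra_simps)
    finally show ?thesis using m by (simp add: mult_less_cancel_right)
  qed
  then show ?thesis using m by (simp add: divide_less_eq)
qed

lemma key2:
  fixes N a x y :: real
  assumes "0 < a" "a < 1" "y \<le> (N - x)/(1-a)"
    and "x > (N*a + (1-a)^2) / (a*(2-a))"
  shows "(N - y)/(1-a) > x + 1"
proof -
  have m: "1 - a > 0" using assms by simp
  have d: "a*(2-a) > 0" using assms by simp
  have h1: "x * (a*(2-a)) > N*a + (1-a)^2" using assms(4) d by (simp add: pos_divide_less_eq)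
  have h2: "y*(1-a) \<le> N - x" using assms(3) m by (simp add: field_simps)
  have "N - y > (x+1)*(1-a)"
  proof -
    have "(N - y)*(1-a) = N*(1-a) - y*(1-a)" by (simp add: algebra_simps)
    then have A: "(N - y)*(1-a) \<ge> N*(1-a) - N + x" using h2 by linarith
    have "N*(1-a) - N + x > (x+1)*(1-a)*(1-a)" using h1 by (simp add: algebra_simps power2_eq_square)
    with A have "(N - y)*(1-a) > (x+1)*(1-a)*(1-a)" by linarith
    then show ?thesis using m by (simp add: mult_less_cancel_right)
  qed
  then show ?thesis using m by (simp add: less_divide_eq)
qed

theorem mainTheorem2:
  fixes a b :: real and e0 :: nat
  assumes "0 < a" "a < 1" "0 \<le> b" "b < 1"
    and "2 ^ e0 * a \<in> \<int>" "2 ^ e0 * b \<in> \<int>"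
  shows "\<exists>E::nat. \<forall>e::nat. e \<ge> max E e0 \<longrightarrow>
    (let kr = - 1 / (1 - a); c = 1 / (2 - a);
         T = tent_fp e a b;
         x' = Max {x \<in> {0..2^e}. real_of_int x \<ge> 2^e * a \<and> real_of_int (T x) \<ge> 2^e * a}
     in (\<forall>x::int. 2^e * a \<le> real_of_int x \<and> real_of_int x \<le> 2^e * c + kr / (kr^2 - 1)
            \<longrightarrow> T (T x) < x)
      \<and> (\<forall>x::int. 2^e * c + 1 / (kr^2 - 1) < real_of_int x \<and> x \<le> x'
            \<longrightarrow> T (T x) > x))"
proof (intro exI[of _ 0] allI impI)
  fix e :: nat
  assume "e \<ge> max 0 e0"
  then have ee: "e0 \<le> e" by simp
  define N :: real where "N = 2^e"
  have Npos: "N > 0" unfolding N_def by simp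
  have m: "1 - a > 0" using assms by simp
  have d: "a*(2-a) > 0" using assms by simp
  have "N * a = 2^(e-e0) * (2^e0 * a)" unfolding N_def
    using ee by (simp add: power_add[symmetric])
  also have "\<dots> \<in> \<int>" using assms(5) by simp
  finally obtain A :: int where A: "N * a = of_int A" by (auto elim: Ints_cases)
  define T where "T = tent_fp e a b"
  have Tr: "T x = \<lfloor>(N - real_of_int x) / (1 - a)\<rfloor>" if "N * a \<le> real_of_int x" for x
    using tent_right[of e a x b] that unfolding T_def N_def by simp
  have a0: "a \<noteq> 0" and m0: "1 - a \<noteq> 0" and t0: "2 - a \<noteq> 0" using assms by auto
  have kr: "(- 1 / (1 - a))^2 - 1 = a*(2-a)/(1-a)^2"
  proof -
    have q: "(1-a)^2 \<noteq> 0" using m0 by simp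
    have "(- 1 / (1 - a))^2 = 1/(1-a)^2" by (simp add: power_divide)
    also have "1/(1-a)^2 - 1 = (1 - (1-a)^2)/(1-a)^2" using q by (simp add: diff_divide_distrib)
    also have "1 - (1-a)^2 = a*(2-a)" by (simp add: power2_eq_square algebra_simps)
    finally show ?thesis .
  qed
  have kk: "(- 1 / (1 - a)) / ((- 1 / (1 - a))^2 - 1) = - (1-a)/(a*(2-a))"
  proof -
    have p: "a*(2-a) \<noteq> 0" using a0 t0 by simp
    have "\<And>p m::real. p \<noteq> 0 \<Longrightarrow> m \<noteq> 0 \<Longrightarrow> (-1/m)/(p/m^2) = -m/p"
      by (simp add: field_simps power2_eq_square)
    then show ?thesis unfolding kr using p m0 by blast
  qed
  have kk2: "1 / ((- 1 / (1 - a))^2 - 1) = (1-a)^2/(a*(2-a))"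
    unfolding kr using a0 m0 t0 by (simp add: field_simps power2_eq_square)
  have b1: "N * (1/(2-a)) + (- 1 / (1 - a)) / ((- 1 / (1 - a))^2 - 1) = (N*a - (1-a)) / (a*(2-a))"
  proof -
    have g: "\<And>t q::real. t \<noteq> 0 \<Longrightarrow> N*(1/t) + q/(a*t) = (N*a + q)/(a*t)"
      using a0 by (simp add: field_simps)
    have "N*(1/(2-a)) + (-(1-a))/(a*(2-a)) = (N*a + (-(1-a)))/(a*(2-a))" using g t0 by blast
    then show ?thesis unfolding kk by (simp add: minus_divide_left)
  qed
  have b2: "N * (1/(2-a)) + 1 / ((- 1 / (1 - a))^2 - 1) = (N*a + (1-a)^2) / (a*(2-a))"
  proof -
    have "\<And>t q::real. t \<noteq> 0 \<Longrightarrow> N*(1/t) + q/(a*t) = (N*a + q)/(a*t)"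
      using a0 by (simp add: field_simps)
    then show ?thesis unfolding kk2 using t0 by blast
  qed
  have c1: "N * (1/(2-a)) \<ge> N * a"
  proof -
    have "a*(2-a) \<le> 1" using zero_le_power2[of "1-a"] by (simp add: power2_eq_square algebra_simps)
    then have "N * (a*(2-a)) \<le> N" using Npos by (simp add: mult_left_le)
    then have "N * a \<le> N / (2-a)" using assms(2) by (simp add: le_divide_eq algebra_simps)
    then show ?thesis by simp
  qed
  define S where "S = {x \<in> {0..2^e}. real_of_int x \<ge> N * a \<and> real_of_int (T x) \<ge> N * a}"
  have AS: "A \<in> S"
  proof -
    have "(N - N*a)/(1-a) = N" using m0 by (simp add: field_simps)
    then have "T A = \<lfloor>N\<rfloor>" using Tr[of A] A by simp
    moreover have NN: "\<lfloor>N\<rfloor> = 2^e" "N = of_int (2^e)" unfolding N_def by simp_all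
    ultimately have TA: "T A = 2^e" by simp
    have "N * a \<ge> 0" using Npos assms by simp
    then have "A \<ge> 0" using A by simp
    moreover have "N * a \<le> N" using Npos assms by simp
    then have "A \<le> 2^e" using A NN(2) by linarith
    ultimately show ?thesis unfolding S_def using A TA Npos NN(2) assms(2)
      by (auto simp: mult_left_le)
  qed
  have fS: "finite S" unfolding S_def by (rule finite_subset[of _ "{0..2^e}"]) auto
  have xS: "Max S \<in> S" using AS fS by (intro Max_in) auto
  show "let kr = - 1 / (1 - a); c = 1 / (2 - a);
         T = tent_fp e a b;
         x' = Max {x \<in> {0..2^e}. real_of_int x \<ge> 2^e * a \<and> real_of_int (T x) \<ge> 2^e * a}
     in (\<forall>x::int. 2^e * a \<le> real_of_int x \<and> real_of_int x \<le> 2^e * c + kr / (kr^2 - 1)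
            \<longrightarrow> T (T x) < x)
      \<and> (\<forall>x::int. 2^e * c + 1 / (kr^2 - 1) < real_of_int x \<and> x \<le> x'
            \<longrightarrow> T (T x) > x)"
    unfolding Let_def N_def[symmetric] T_def[symmetric] S_def[symmetric] b1 b2
  proof (intro conjI allI impI)
    fix x :: int
    assume h: "N * a \<le> real_of_int x \<and> real_of_int x \<le> (N*a - (1-a)) / (a*(2-a))"
    define z where "z = (N - real_of_int x) / (1 - a)"
    have Tx: "T x = \<lfloor>z\<rfloor>" using Tr h unfolding z_def by simp
    have "x * (a*(2-a)) \<le> N*a - (1-a)" using h d by (simp add: pos_le_divide_eq)
    then have "x * (a*(2-a)) \<le> N*a" using m by linarith
    then have "(x * (2-a)) * a \<le> N * a" by (simp add: algebra_simps)
    then have "x * (2-a) \<le> N" using assms(1) by simp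
    then have xc: "x \<le> N/(2-a)" using assms(2) by (simp add: le_divide_eq)
    have "N - N/(2-a) = N/(2-a)*(1-a)" using t0 by (simp add: field_simps)
    then have "(N - N/(2-a))/(1-a) = N/(2-a)" using m0 by simp
    moreover have "(N - N/(2-a))/(1-a) \<le> z" unfolding z_def using xc m
      by (simp add: divide_right_mono)
    ultimately have "z \<ge> N * a" using c1 by simp
    then have zA: "A \<le> \<lfloor>z\<rfloor>" using A by (simp add: le_floor_iff)
    have "T (T x) = \<lfloor>(N - real_of_int \<lfloor>z\<rfloor>) / (1 - a)\<rfloor>"
      using Tr[of "\<lfloor>z\<rfloor>"] zA A Tx by simp
    moreover have "(N - real_of_int \<lfloor>z\<rfloor>) / (1 - a) < x"
      apply (rule key1[OF assms(1,2)])
      using floor_correct[of z] h unfolding z_def by auto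
    ultimately show "T (T x) < x" by (simp add: floor_less_iff)
  next
    fix x :: int
    assume h: "(N*a + (1-a)^2) / (a*(2-a)) < real_of_int x \<and> x \<le> Max S"
    define xm where "xm = Max S"
    have xmS: "xm \<in> S" using xS unfolding xm_def .
    have xm1: "N * a \<le> real_of_int xm" and xm2: "N * a \<le> real_of_int (T xm)"
      using xmS unfolding S_def by auto
    have "(N*a)/(a*(2-a)) \<le> (N*a + (1-a)^2) / (a*(2-a))" using d
      by (intro divide_right_mono) auto
    moreover have "(N*a)/(a*(2-a)) = N * (1/(2-a))" using a0 t0 by (simp add: field_simps)
    ultimately have xa: "N * a \<le> real_of_int x" using h c1 by linarith
    define z where "z = (N - real_of_int x) / (1 - a)"
    have Tx: "T x = \<lfloor>z\<rfloor>" using Tr xa unfolding z_def by simp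
    have "x \<le> xm" using h unfolding xm_def by simp
    then have "(N - real_of_int xm) / (1 - a) \<le> z" unfolding z_def using m
      by (simp add: divide_right_mono)
    then have "T xm \<le> \<lfloor>z\<rfloor>" using Tr[OF xm1] by (simp add: floor_mono)
    then have zA: "N * a \<le> real_of_int \<lfloor>z\<rfloor>" using xm2 by linarith
    have "T (T x) = \<lfloor>(N - real_of_int \<lfloor>z\<rfloor>) / (1 - a)\<rfloor>"
      using Tr[of "\<lfloor>z\<rfloor>"] zA Tx by simp
    moreover have "(N - real_of_int \<lfloor>z\<rfloor>) / (1 - a) > real_of_int x + 1"
      apply (rule key2[OF assms(1,2)])
      using floor_correct[of z] h unfolding z_def by auto
    ultimately show "T (T x) > x" by (simp add: less_floor_iff)
  qed
qed

end
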